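(* Let $T=(p,q:F\to E)$ be an LR textile system with $p$ surjective and $F$ source-free, $\Lambda=\Lambda_T$, and let $\{\mathcal G^i_z: z\in E^0, 1\le i\le m(z)\}$ be a 2-graph insplitting partition of $\Lambda$. Define $\mathcal F^i_v=\{\lambda\in F^1: r(\lambda)=v,\ p(\lambda)\in\mathcal G^i_{p(v)}\}$ for $v\in F^0$, $1\le i\le m(p(v))$, and $\mathcal E^i_z=\mathcal G^i_z\cap zE^1$. Then: (1a) if $v,w\in F^0$ and $p(\mathcal F^i_v)\cap p(\mathcal F^j_w)\neq\emptyset$ then $p(\mathcal F^i_v)=p(\mathcal F^j_w)$; (1b) for each $v\in F^0$ there are $w\in F^0$ and $j$ with $q(vF^1)\subseteq p(\mathcal F^j_w)$; (2) $\mathcal E^i_z=p(\mathcal F^i_v)$ for every $v\in F^0$ with $p(v)=z$; (3) $\mathcal G^i_z=\mathcal E^i_z\sqcup r_F(q^{-1}(\mathcal E^i_z))$ for all $z\in E^0$ and $1\le i\le m(z)$.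
   Context: Directed graph $E=(E^0,E^1,r,s)$, $zE^1=r^{-1}(z)$; $F$ source-free: $r$ onto $F^0$. Textile system $T=(p,q:F\to E)$: graph homomorphisms (commuting with $r,s$) with $f\mapsto(r(f),p(f),s(f),q(f))$ injective. LR: $p$ has unique $r$-path lifting (for $v\in F^0,e\in E^1$ with $p(v)=r(e)$, exactly one $f\in F^1$ with $r(f)=v,p(f)=e$), $q$ has unique $s$-path lifting (same with $s$). $\Lambda_T$ is the 2-graph with vertices $E^0$, color-1 edges $E^1$ (range/source from $E$), color-2 edges $F^0$ with $r(w)=q(w)$, $s(w)=p(w)$, and commuting squares $ve\sim e'w$ iff some $f\in F^1$ has $r(f)=v,s(f)=w,p(f)=e,q(f)=e'$; $\Lambda^1=E^1\sqcup F^0$. A 2-graph insplitting partition: for each $z\in E^0$, a partition of the edges of $\Lambda^1$ with range $z$ into nonempty sets $\mathcal G^1_z,\dots,\mathcal G^{m(z)}_z$ with the pairing condition: for each $f\in F^1$ (a commuting square $r(f)p(f)\sim q(f)s(f)$), the edges $r(f)$ and $q(f)$ lie in the same set $\mathcal G^j_{q(r(f))}$. *)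

theory Defs
  imports Main
begin

record ('v, 'e) dgraph =
  verts :: "'v set"
  edges :: "'e set"
  rg :: "'e \<Rightarrow> 'v"
  sg :: "'e \<Rightarrow> 'v"

definition wf_graph :: "('v, 'e) dgraph \<Rightarrow> bool" where
  "wf_graph G \<longleftrightarrow> (\<forall>e\<in>edges G. rg G e \<in> verts G \<and> sg G e \<in> verts G)"

definition source_free :: "('v, 'e) dgraph \<Rightarrow> bool" where
  "source_free G \<longleftrightarrow> rg G ` edges G = verts G"

definition graph_hom ::
  "('a, 'b) dgraph \<Rightarrow> ('v, 'e) dgraph \<Rightarrow> ('a \<Rightarrow> 'v) \<Rightarrow> ('b \<Rightarrow> 'e) \<Rightarrow> bool" where
  "graph_hom F E h0 h1 \<longleftrightarrow>
     (\<forall>v\<in>verts F. h0 v \<in> verts E) \<and> (\<forall>f\<in>edges F. h1 f \<in> edges E) \<and>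
     (\<forall>f\<in>edges F. rg E (h1 f) = h0 (rg F f) \<and> sg E (h1 f) = h0 (sg F f))"

definition surj_graph_hom ::
  "('a, 'b) dgraph \<Rightarrow> ('v, 'e) dgraph \<Rightarrow> ('a \<Rightarrow> 'v) \<Rightarrow> ('b \<Rightarrow> 'e) \<Rightarrow> bool" where
  "surj_graph_hom F E h0 h1 \<longleftrightarrow> h0 ` verts F = verts E \<and> h1 ` edges F = edges E"

definition textile_system ::
  "('v, 'e) dgraph \<Rightarrow> ('a, 'b) dgraph \<Rightarrow> ('a \<Rightarrow> 'v) \<Rightarrow> ('b \<Rightarrow> 'e) \<Rightarrow>
   ('a \<Rightarrow> 'v) \<Rightarrow> ('b \<Rightarrow> 'e) \<Rightarrow> bool" where
  "textile_system E F p0 p1 q0 q1 \<longleftrightarrow>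
     wf_graph E \<and> wf_graph F \<and> graph_hom F E p0 p1 \<and> graph_hom F E q0 q1 \<and>
     inj_on (\<lambda>f. (rg F f, p1 f, sg F f, q1 f)) (edges F)"

definition LR_textile ::
  "('v, 'e) dgraph \<Rightarrow> ('a, 'b) dgraph \<Rightarrow> ('a \<Rightarrow> 'v) \<Rightarrow> ('b \<Rightarrow> 'e) \<Rightarrow>
   ('a \<Rightarrow> 'v) \<Rightarrow> ('b \<Rightarrow> 'e) \<Rightarrow> bool" where
  "LR_textile E F p0 p1 q0 q1 \<longleftrightarrow>
     textile_system E F p0 p1 q0 q1 \<and>
     (\<forall>v\<in>verts F. \<forall>e\<in>edges E. p0 v = rg E e \<longrightarrow>
        (\<exists>!f. f \<in> edges F \<and> rg F f = v \<and> p1 f = e)) \<and>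
     (\<forall>v\<in>verts F. \<forall>e\<in>edges E. q0 v = sg E e \<longrightarrow>
        (\<exists>!f. f \<in> edges F \<and> sg F f = v \<and> q1 f = e))"

text \<open>Edges of \<Lambda>_T^1 = E^1 \<squnion> F^0 (as the sum type, Inl for colour 1, Inr for colour 2)
  with range z; colour-2 edge w has range q(w).\<close>
definition lam_edges_at ::
  "('v, 'e) dgraph \<Rightarrow> ('a, 'b) dgraph \<Rightarrow> ('a \<Rightarrow> 'v) \<Rightarrow> 'v \<Rightarrow> ('e + 'a) set" where
  "lam_edges_at E F q0 z =
     Inl ` {e \<in> edges E. rg E e = z} \<union> Inr ` {w \<in> verts F. q0 w = z}"

definition insplitting_partition ::
  "('v, 'e) dgraph \<Rightarrow> ('a, 'b) dgraph \<Rightarrow> ('b \<Rightarrow> 'e) \<Rightarrow> ('a \<Rightarrow> 'v) \<Rightarrow> ('b \<Rightarrow> 'e) \<Rightarrow>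
   ('v \<Rightarrow> nat) \<Rightarrow> ('v \<Rightarrow> nat \<Rightarrow> ('e + 'a) set) \<Rightarrow> bool" where
  "insplitting_partition E F p1 q0 q1 m G \<longleftrightarrow>
     (\<forall>z\<in>verts E.
        (\<forall>i\<in>{1..m z}. G z i \<noteq> {} \<and> G z i \<subseteq> lam_edges_at E F q0 z) \<and>
        (\<forall>i\<in>{1..m z}. \<forall>j\<in>{1..m z}. i \<noteq> j \<longrightarrow> G z i \<inter> G z j = {}) \<and>
        (\<Union>i\<in>{1..m z}. G z i) = lam_edges_at E F q0 z) \<and>
     (\<forall>f\<in>edges F. \<exists>j\<in>{1..m (q0 (rg F f))}.
        Inr (rg F f) \<in> G (q0 (rg F f)) j \<and> Inl (q1 f) \<in> G (q0 (rg F f)) j)"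

definition FF ::
  "('a, 'b) dgraph \<Rightarrow> ('a \<Rightarrow> 'v) \<Rightarrow> ('b \<Rightarrow> 'e) \<Rightarrow> ('v \<Rightarrow> nat \<Rightarrow> ('e + 'a) set) \<Rightarrow>
   'a \<Rightarrow> nat \<Rightarrow> 'b set" where
  "FF F p0 p1 G v i = {l \<in> edges F. rg F l = v \<and> Inl (p1 l) \<in> G (p0 v) i}"

definition EE ::
  "('v, 'e) dgraph \<Rightarrow> ('v \<Rightarrow> nat \<Rightarrow> ('e + 'a) set) \<Rightarrow> 'v \<Rightarrow> nat \<Rightarrow> 'e set" where
  "EE E G z i = {e \<in> edges E. rg E e = z \<and> Inl e \<in> G z i}"

end

theory Submission
  imports Defs
begin

theorem theorem7p13:
  fixes E :: "('v, 'e) dgraph" and F :: "('a, 'b) dgraph"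
    and p0 q0 :: "'a \<Rightarrow> 'v" and p1 q1 :: "'b \<Rightarrow> 'e"
    and m :: "'v \<Rightarrow> nat" and G :: "'v \<Rightarrow> nat \<Rightarrow> ('e + 'a) set"
  assumes LR: "LR_textile E F p0 p1 q0 q1"
    and psurj: "surj_graph_hom F E p0 p1"
    and sf: "source_free F"
    and part: "insplitting_partition E F p1 q0 q1 m G"
  shows
    "(\<forall>v\<in>verts F. \<forall>w\<in>verts F. \<forall>i\<in>{1..m (p0 v)}. \<forall>j\<in>{1..m (p0 w)}.
        p1 ` FF F p0 p1 G v i \<inter> p1 ` FF F p0 p1 G w j \<noteq> {} \<longrightarrow>
        p1 ` FF F p0 p1 G v i = p1 ` FF F p0 p1 G w j)
   \<and> (\<forall>v\<in>verts F. \<exists>w\<in>verts F. \<exists>j\<in>{1..m (p0 w)}.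
        q1 ` {f \<in> edges F. rg F f = v} \<subseteq> p1 ` FF F p0 p1 G w j)
   \<and> (\<forall>z\<in>verts E. \<forall>i\<in>{1..m z}. \<forall>v\<in>verts F. p0 v = z \<longrightarrow>
        EE E G z i = p1 ` FF F p0 p1 G v i)
   \<and> (\<forall>z\<in>verts E. \<forall>i\<in>{1..m z}.
        G z i = Inl ` EE E G z i \<union> Inr ` (rg F ` {f \<in> edges F. q1 f \<in> EE E G z i}))"
proof -
  have ts: "textile_system E F p0 p1 q0 q1" using LR unfolding LR_textile_def by blast
  have wfE: "wf_graph E" and wfF: "wf_graph F" and hp: "graph_hom F E p0 p1"
    and hq: "graph_hom F E q0 q1" using ts unfolding textile_system_def by auto
  have lift: "\<And>v e. v \<in> verts F \<Longrightarrow> e \<in> edges E \<Longrightarrow> p0 v = rg E e \<Longrightarrow>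
      \<exists>f. f \<in> edges F \<and> rg F f = v \<and> p1 f = e"
    using LR unfolding LR_textile_def by metis
  have hp1: "\<And>f. f \<in> edges F \<Longrightarrow> p1 f \<in> edges E \<and> rg E (p1 f) = p0 (rg F f)"
    using hp unfolding graph_hom_def by auto
  have hq1: "\<And>f. f \<in> edges F \<Longrightarrow> q1 f \<in> edges E \<and> rg E (q1 f) = q0 (rg F f)"
    using hq unfolding graph_hom_def by auto
  have hq0: "\<And>v. v \<in> verts F \<Longrightarrow> q0 v \<in> verts E"
    using hq unfolding graph_hom_def by auto
  have hp0: "\<And>v. v \<in> verts F \<Longrightarrow> p0 v \<in> verts E"
    using hp unfolding graph_hom_def by auto
  have rgE: "\<And>e. e \<in> edges E \<Longrightarrow> rg E e \<in> verts E" using wfE unfolding wf_graph_def by auto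
  have rgF: "\<And>f. f \<in> edges F \<Longrightarrow> rg F f \<in> verts F" using wfF unfolding wf_graph_def by auto
  have psv: "p0 ` verts F = verts E" using psurj unfolding surj_graph_hom_def by auto
  have sfv: "\<And>v. v \<in> verts F \<Longrightarrow> \<exists>f\<in>edges F. rg F f = v" using sf unfolding source_free_def by (metis imageE)
  have disj: "\<And>z i j x. z \<in> verts E \<Longrightarrow> i \<in> {1..m z} \<Longrightarrow> j \<in> {1..m z} \<Longrightarrow> x \<in> G z i \<Longrightarrow> x \<in> G z j \<Longrightarrow> i = j"
    using part unfolding insplitting_partition_def by blast
  have sub: "\<And>z i. z \<in> verts E \<Longrightarrow> i \<in> {1..m z} \<Longrightarrow> G z i \<subseteq> lam_edges_at E F q0 z"
    using part unfolding insplitting_partition_def by blast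
  have pair: "\<And>f. f \<in> edges F \<Longrightarrow> \<exists>j\<in>{1..m (q0 (rg F f))}.
        Inr (rg F f) \<in> G (q0 (rg F f)) j \<and> Inl (q1 f) \<in> G (q0 (rg F f)) j"
    using part unfolding insplitting_partition_def by blast
  have P2: "\<And>v i. v \<in> verts F \<Longrightarrow> EE E G (p0 v) i = p1 ` FF F p0 p1 G v i"
  proof -
    fix v i assume v: "v \<in> verts F"
    show "EE E G (p0 v) i = p1 ` FF F p0 p1 G v i"
    proof
      show "EE E G (p0 v) i \<subseteq> p1 ` FF F p0 p1 G v i"
      proof
        fix e assume "e \<in> EE E G (p0 v) i"
        hence e: "e \<in> edges E" "rg E e = p0 v" "Inl e \<in> G (p0 v) i" unfolding EE_def by auto
        then obtain f where "f \<in> edges F" "rg F f = v" "p1 f = e" using lift[OF v e(1)] by metis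
        thus "e \<in> p1 ` FF F p0 p1 G v i" using e unfolding FF_def by auto
      qed
    next
      show "p1 ` FF F p0 p1 G v i \<subseteq> EE E G (p0 v) i"
        using hp1 unfolding FF_def EE_def by auto
    qed
  qed
  have A: "\<forall>v\<in>verts F. \<forall>w\<in>verts F. \<forall>i\<in>{1..m (p0 v)}. \<forall>j\<in>{1..m (p0 w)}.
        p1 ` FF F p0 p1 G v i \<inter> p1 ` FF F p0 p1 G w j \<noteq> {} \<longrightarrow>
        p1 ` FF F p0 p1 G v i = p1 ` FF F p0 p1 G w j"
  proof (intro ballI impI)
    fix v w i j assume v: "v \<in> verts F" and w: "w \<in> verts F" and i: "i \<in> {1..m (p0 v)}"
      and j: "j \<in> {1..m (p0 w)}"
      and ne: "p1 ` FF F p0 p1 G v i \<inter> p1 ` FF F p0 p1 G w j \<noteq> {}"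
    then obtain e where "e \<in> EE E G (p0 v) i" "e \<in> EE E G (p0 w) j" using P2 by blast
    hence e: "e \<in> edges E" "rg E e = p0 v" "rg E e = p0 w" "Inl e \<in> G (p0 v) i" "Inl e \<in> G (p0 w) j"
      unfolding EE_def by auto
    have "i = j" using disj[OF hp0[OF v] i, of j "Inl e"] e j by auto
    thus "p1 ` FF F p0 p1 G v i = p1 ` FF F p0 p1 G w j" using P2[OF v] P2[OF w] e by metis
  qed
  have B: "\<forall>v\<in>verts F. \<exists>w\<in>verts F. \<exists>j\<in>{1..m (p0 w)}.
        q1 ` {f \<in> edges F. rg F f = v} \<subseteq> p1 ` FF F p0 p1 G w j"
  proof
    fix v assume v: "v \<in> verts F"
    obtain f0 where f0: "f0 \<in> edges F" "rg F f0 = v" using sfv[OF v] by blast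
    obtain j0 where j0: "j0 \<in> {1..m (q0 v)}" "Inr v \<in> G (q0 v) j0" using pair[OF f0(1)] f0 by auto
    obtain w where w: "w \<in> verts F" "p0 w = q0 v" using psv hq0[OF v] by (metis imageE)
    have "q1 ` {f \<in> edges F. rg F f = v} \<subseteq> EE E G (q0 v) j0"
    proof
      fix e assume "e \<in> q1 ` {f \<in> edges F. rg F f = v}"
      then obtain f where f: "f \<in> edges F" "rg F f = v" "e = q1 f" by auto
      obtain j where j: "j \<in> {1..m (q0 v)}" "Inr v \<in> G (q0 v) j" "Inl (q1 f) \<in> G (q0 v) j"
        using pair[OF f(1)] f by auto
      have "j = j0" using disj[OF hq0[OF v] j(1) j0(1) j(2) j0(2)] .
      thus "e \<in> EE E G (q0 v) j0" using j hq1[OF f(1)] f unfolding EE_def by auto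
    qed
    thus "\<exists>w\<in>verts F. \<exists>j\<in>{1..m (p0 w)}. q1 ` {f \<in> edges F. rg F f = v} \<subseteq> p1 ` FF F p0 p1 G w j"
    proof -
      assume h: "q1 ` {f \<in> edges F. rg F f = v} \<subseteq> EE E G (q0 v) j0"
      have "j0 \<in> {1..m (p0 w)}" using j0 w by simp
      moreover have "q1 ` {f \<in> edges F. rg F f = v} \<subseteq> p1 ` FF F p0 p1 G w j0"
        using h P2[OF w(1)] w by simp
      ultimately show ?thesis using w(1) by blast
    qed
  qed
  have C: "\<forall>z\<in>verts E. \<forall>i\<in>{1..m z}. \<forall>v\<in>verts F. p0 v = z \<longrightarrow>
        EE E G z i = p1 ` FF F p0 p1 G v i" using P2 by blast
  have D: "\<forall>z\<in>verts E. \<forall>i\<in>{1..m z}.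
        G z i = Inl ` EE E G z i \<union> Inr ` (rg F ` {f \<in> edges F. q1 f \<in> EE E G z i})"
  proof (intro ballI equalityI subsetI)
    fix z i x assume z: "z \<in> verts E" and i: "i \<in> {1..m z}" and x: "x \<in> G z i"
    have xl: "x \<in> lam_edges_at E F q0 z" using sub[OF z i] x by auto
    show "x \<in> Inl ` EE E G z i \<union> Inr ` (rg F ` {f \<in> edges F. q1 f \<in> EE E G z i})"
    proof (cases x)
      case (Inl e)
      thus ?thesis using xl x unfolding lam_edges_at_def EE_def by auto
    next
      case (Inr w)
      hence w: "w \<in> verts F" "q0 w = z" using xl unfolding lam_edges_at_def by auto
      obtain f where f: "f \<in> edges F" "rg F f = w" using sfv[OF w(1)] by blast
      obtain j where j: "j \<in> {1..m z}" "Inr w \<in> G z j" "Inl (q1 f) \<in> G z j"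
        using pair[OF f(1)] f w by auto
      have "j = i" using disj[OF z j(1) i j(2)] x Inr by auto
      hence "q1 f \<in> EE E G z i" using j hq1[OF f(1)] f w unfolding EE_def by auto
      thus ?thesis using Inr f by auto
    qed
  next
    fix z i x assume z: "z \<in> verts E" and i: "i \<in> {1..m z}"
      and x: "x \<in> Inl ` EE E G z i \<union> Inr ` (rg F ` {f \<in> edges F. q1 f \<in> EE E G z i})"
    show "x \<in> G z i"
    proof (cases "x \<in> Inl ` EE E G z i")
      case True thus ?thesis unfolding EE_def by auto
    next
      case False
      then obtain f where f: "f \<in> edges F" "q1 f \<in> EE E G z i" "x = Inr (rg F f)" using x by auto
      have fz: "q0 (rg F f) = z" "Inl (q1 f) \<in> G z i" using f(2) hq1[OF f(1)] unfolding EE_def by auto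
      obtain j where j: "j \<in> {1..m z}" "Inr (rg F f) \<in> G z j" "Inl (q1 f) \<in> G z j"
        using pair[OF f(1)] fz by auto
      have "j = i" using disj[OF z j(1) i j(3) fz(2)] .
      thus ?thesis using j f by auto
    qed
  qed
  show ?thesis using A B C D by blast
qed

end
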